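(* The maximum of $\operatorname{rk}_\perp(A)$ over all real tensors $A\in\mathbb{R}^3\otimes\mathbb{R}^3\otimes\mathbb{R}^3$ equals $7$.
   Context: An $(n_1,\dots,n_d)$-tensor is an $n_1\times\cdots\times n_d$ real array. The Frobenius inner product is $\langle A,A'\rangle_F=\sum a_{i_1\dots i_d}a'_{i_1\dots i_d}$. A rank-one tensor is a nonzero outer product $x^{(1)}\otimes\cdots\otimes x^{(d)}$, whose entries are $x^{(1)}_{i_1}\cdots x^{(d)}_{i_d}$. The orthogonal rank $\operatorname{rk}_\perp(A)$ of a tensor $A$ is the smallest $r$ such that $A=Y_1+\dots+Y_r$ with rank-one tensors $Y_\ell$ satisfying $\langle Y_\ell,Y_{\ell'}\rangle_F=0$ for all $\ell\neq\ell'$. The zero tensor has orthogonal rank $0$. *)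

theory Defs
  imports "HOL-Analysis.Analysis"
begin

type_synonym tensor333 = "real ^ 3 ^ 3 ^ 3"

definition frob_inner :: "tensor333 \<Rightarrow> tensor333 \<Rightarrow> real" where
  "frob_inner A B = (\<Sum>i\<in>UNIV. \<Sum>j\<in>UNIV. \<Sum>k\<in>UNIV. A $ i $ j $ k * B $ i $ j $ k)"

definition rank_one :: "tensor333 \<Rightarrow> bool" where
  "rank_one Y \<longleftrightarrow> Y \<noteq> 0 \<and>
     (\<exists>x y z :: real ^ 3. \<forall>i j k. Y $ i $ j $ k = x $ i * y $ j * z $ k)"

definition orth_decomp :: "tensor333 \<Rightarrow> nat \<Rightarrow> bool" where
  "orth_decomp A r \<longleftrightarrow> (\<exists>Y :: nat \<Rightarrow> tensor333.
      A = (\<Sum>l<r. Y l) \<and> (\<forall>l<r. rank_one (Y l)) \<and>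
      (\<forall>l<r. \<forall>l'<r. l \<noteq> l' \<longrightarrow> frob_inner (Y l) (Y l') = 0))"

definition orth_rank :: "tensor333 \<Rightarrow> nat" where
  "orth_rank A = (LEAST r. orth_decomp A r)"

end

theory Submission
  imports Defs
begin


definition outer :: "real^3 \<Rightarrow> real^3 \<Rightarrow> real^3 \<Rightarrow> tensor333" where
  "outer x y z = (\<chi> i j k. x$i * y$j * z$k)"

lemma outer_nth[simp]: "outer x y z $ i $ j $ k = x$i * y$j * z$k"
  by (simp add: outer_def)

lemma frob_outer: "frob_inner (outer x y z) (outer x' y' z') = (x \<bullet> x') * (y \<bullet> y') * (z \<bullet> z')"
  unfolding frob_inner_def inner_vec_def
  by (simp add: sum_3 algebra_simps)

lemma frob_comm: "frob_inner A B = frob_inner B A"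
  unfolding frob_inner_def by (simp add: mult.commute)

lemma frob_sum_left: "frob_inner (sum Y S) B = (\<Sum>l\<in>S. frob_inner (Y l) B)"
  unfolding frob_inner_def by (simp add: sum_distrib_right sum.swap[of _ S])

lemma rank_one_outer: "outer x y z \<noteq> 0 \<Longrightarrow> rank_one (outer x y z)"
  unfolding rank_one_def by auto

lemma t3: "(1::3) \<noteq> 2 \<and> (1::3) \<noteq> 3 \<and> (2::3) \<noteq> 3"
  by simp

lemma card9: "card (UNIV :: (3 \<times> 3) set) = 9" by simp



lemma filter_decomp:
  assumes "finite I" "\<forall>i\<in>I. Y i = 0 \<or> rank_one (Y i)"
    "\<forall>i\<in>I. \<forall>j\<in>I. i \<noteq> j \<longrightarrow> frob_inner (Y i) (Y j) = 0"
  shows "\<exists>r \<le> card I. \<exists>Z. sum Y I = (\<Sum>l<r. Z l) \<and> (\<forall>l<r. rank_one (Z l) \<and> (\<exists>i\<in>I. Z l = Y i))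
     \<and> (\<forall>l<r. \<forall>l'<r. l \<noteq> l' \<longrightarrow> frob_inner (Z l) (Z l') = 0)"
  using assms(1,2,3)
proof (induction I rule: finite_induct)
  case empty
  then show ?case by (rule_tac x=0 in exI) auto
next
  case (insert x F)
  have p1: "\<forall>i\<in>F. Y i = 0 \<or> rank_one (Y i)" using insert.prems(1) by simp
  have p2: "\<forall>i\<in>F. \<forall>j\<in>F. i \<noteq> j \<longrightarrow> frob_inner (Y i) (Y j) = 0" using insert.prems(2) by simp
  obtain r Z where r: "r \<le> card F" and s: "sum Y F = (\<Sum>l<r. Z l)"
    and z: "\<forall>l<r. rank_one (Z l) \<and> (\<exists>i\<in>F. Z l = Y i)"
    and o: "\<forall>l<r. \<forall>l'<r. l \<noteq> l' \<longrightarrow> frob_inner (Z l) (Z l') = 0"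
    using insert.IH[OF p1 p2] by blast
  have cF: "card (insert x F) = Suc (card F)" using insert.hyps by simp
  show ?case
  proof (cases "Y x = 0")
    case True
    have "sum Y (insert x F) = (\<Sum>l<r. Z l)" using s insert.hyps True by simp
    moreover have "\<forall>l<r. rank_one (Z l) \<and> (\<exists>i\<in>insert x F. Z l = Y i)" using z by blast
    ultimately show ?thesis using r o cF
      by (intro exI[of _ r]) auto
  next
    case False
    define Z' where "Z' = Z(r := Y x)"
    have s': "sum Y (insert x F) = (\<Sum>l<Suc r. Z' l)"
      using s insert.hyps by (simp add: Z'_def add.commute)
    have ox: "frob_inner (Y x) (Z l) = 0" if lr: "l < r" for l
    proof -
      obtain i where i: "i \<in> F" "Z l = Y i" using z lr by blast
      then have "x \<noteq> i" using insert.hyps by auto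
      then show ?thesis using insert.prems(2) i by simp
    qed
    have z': "\<forall>l<Suc r. rank_one (Z' l) \<and> (\<exists>i\<in>insert x F. Z' l = Y i)"
      using z False insert.prems(1) by (auto simp: Z'_def less_Suc_eq)
    have o': "\<forall>l<Suc r. \<forall>l'<Suc r. l \<noteq> l' \<longrightarrow> frob_inner (Z' l) (Z' l') = 0"
    proof (intro allI impI)
      fix l l' assume "l < Suc r" "l' < Suc r" "l \<noteq> l'"
      then consider "l < r" "l' < r" | "l = r" "l' < r" | "l < r" "l' = r" by linarith
      then show "frob_inner (Z' l) (Z' l') = 0"
      proof cases
        case 1 then show ?thesis using o \<open>l \<noteq> l'\<close> by (simp add: Z'_def)
      next
        case 2 then show ?thesis using ox by (simp add: Z'_def)
      next
        case 3 then show ?thesis using ox frob_comm by (simp add: Z'_def)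
      qed
    qed
    show ?thesis
      using r cF s' z' o' by (intro exI[of _ "Suc r"]) auto
  qed
qed

lemma orth_rank_le:
  assumes "finite I" "\<forall>i\<in>I. Y i = 0 \<or> rank_one (Y i)"
    "\<forall>i\<in>I. \<forall>j\<in>I. i \<noteq> j \<longrightarrow> frob_inner (Y i) (Y j) = 0"
  shows "orth_rank (sum Y I) \<le> card I"
proof -
  obtain r Z where r: "r \<le> card I" and "sum Y I = (\<Sum>l<r. Z l)" "\<forall>l<r. rank_one (Z l)"
     "\<forall>l<r. \<forall>l'<r. l \<noteq> l' \<longrightarrow> frob_inner (Z l) (Z l') = 0"
    using filter_decomp[OF assms] by blast
  then have "orth_decomp (sum Y I) r" unfolding orth_decomp_def by blast
  then have "orth_rank (sum Y I) \<le> r" unfolding orth_rank_def by (rule Least_le)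
  then show ?thesis using r by simp
qed


definition Bt :: tensor333 where
  "Bt = (\<chi> i j k. if k = 1 then (if i = j then -1 else 0)
       else if k = 2 then (if i = 3 \<and> j = 1 then 1 else if i = 1 \<and> j = 3 then -1 else 0)
       else (if i = 1 \<and> j = 2 then 1 else if i = 2 \<and> j = 1 then -1 else 0))"

lemma Bt_norm: "frob_inner Bt Bt = 7"
  unfolding frob_inner_def Bt_def by (simp add: sum_3)

lemma Bt_outer: "frob_inner Bt (outer x y z) =
   z$1 * (-(x$1*y$1 + x$2*y$2 + x$3*y$3)) + z$2 * (x$3*y$1 - x$1*y$3) + z$3 * (x$1*y$2 - x$2*y$1)"
  unfolding frob_inner_def Bt_def by (simp add: sum_3 algebra_simps)

lemma sos_id: fixes x1 x2 x3 y1 y2 y3 z1 z2 z3 :: real shows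
 "(x1^2+x2^2+x3^2)*(y1^2+y2^2+y3^2)*(z1^2+z2^2+z3^2) - (z1 * (-(x1*y1 + x2*y2 + x3*y3)) + z2 * (x3*y1 - x1*y3) + z3 * (x1*y2 - x2*y1))^2
   = (x2*y3 - x3*y2)^2 * (z1^2 + z2^2 + z3^2) + (z1*(x3*y1 - x1*y3) - z2*(-(x1*y1 + x2*y2 + x3*y3)))^2 + (z1*(x1*y2 - x2*y1) - z3*(-(x1*y1 + x2*y2 + x3*y3)))^2 + (z2*(x1*y2 - x2*y1) - z3*(x3*y1 - x1*y3))^2"
  by algebra

lemma outer_norm: "frob_inner (outer x y z) (outer x y z) = (x$1^2+x$2^2+x$3^2)*(y$1^2+y$2^2+y$3^2)*(z$1^2+z$2^2+z$3^2)"
  unfolding frob_outer inner_vec_def by (simp add: sum_3 power2_eq_square)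

lemma Bt_bound: "(frob_inner Bt (outer x y z))^2 \<le> frob_inner (outer x y z) (outer x y z)"
proof -
  have e: "frob_inner (outer x y z) (outer x y z) - (frob_inner Bt (outer x y z))^2
     = (x$2*y$3 - x$3*y$2)^2 * (z$1^2 + z$2^2 + z$3^2) + (z$1*(x$3*y$1 - x$1*y$3) - z$2*(-(x$1*y$1 + x$2*y$2 + x$3*y$3)))^2 + (z$1*(x$1*y$2 - x$2*y$1) - z$3*(-(x$1*y$1 + x$2*y$2 + x$3*y$3)))^2 + (z$2*(x$1*y$2 - x$2*y$1) - z$3*(x$3*y$1 - x$1*y$3))^2"
    unfolding outer_norm Bt_outer by (rule sos_id)
  have "0 \<le> (x$2*y$3 - x$3*y$2)^2 * (z$1^2 + z$2^2 + z$3^2) + (z$1*(x$3*y$1 - x$1*y$3) - z$2*(-(x$1*y$1 + x$2*y$2 + x$3*y$3)))^2 + (z$1*(x$1*y$2 - x$2*y$1) - z$3*(-(x$1*y$1 + x$2*y$2 + x$3*y$3)))^2 + (z$2*(x$1*y$2 - x$2*y$1) - z$3*(x$3*y$1 - x$1*y$3))^2"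
    by (intro add_nonneg_nonneg mult_nonneg_nonneg) auto
  then show ?thesis using e by linarith
qed

lemma Bt_lower:
  assumes "orth_decomp Bt r" shows "7 \<le> r"
proof -
  obtain Y where A: "Bt = (\<Sum>l<r. Y l)" and R: "\<forall>l<r. rank_one (Y l)"
    and O: "\<forall>l<r. \<forall>l'<r. l \<noteq> l' \<longrightarrow> frob_inner (Y l) (Y l') = 0"
    using assms unfolding orth_decomp_def by blast
  have N: "frob_inner (Y l) (Y l) \<le> 1" if l: "l < r" for l
  proof -
    obtain x y z where h: "\<forall>i j k. Y l $ i $ j $ k = x $ i * y $ j * z $ k"
      using R l unfolding rank_one_def by blast
    then have Yl: "Y l = outer x y z" by (simp add: vec_eq_iff)
    have "frob_inner Bt (Y l) = (\<Sum>m<r. frob_inner (Y m) (Y l))"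
      unfolding A frob_sum_left ..
    also have "\<dots> = frob_inner (Y l) (Y l)"
      using O l by (subst sum.remove[of _ l]) (auto intro!: sum.neutral)
    finally have e: "frob_inner Bt (Y l) = frob_inner (Y l) (Y l)" .
    have sq: "(frob_inner (Y l) (Y l))^2 \<le> frob_inner (Y l) (Y l)"
      using Bt_bound[of x y z] e Yl by simp
    show ?thesis
    proof (rule ccontr)
      assume "\<not> frob_inner (Y l) (Y l) \<le> 1"
      hence g: "1 < frob_inner (Y l) (Y l)" by simp
      hence "frob_inner (Y l) (Y l) * 1 < frob_inner (Y l) (Y l) * frob_inner (Y l) (Y l)"
        by (intro mult_strict_left_mono) auto
      with sq show False by (simp add: power2_eq_square)
    qed
  qed
  have "7 = frob_inner Bt Bt" using Bt_norm by simp
  also have "\<dots> = (\<Sum>l<r. frob_inner (Y l) Bt)" by (subst (1) A) (rule frob_sum_left)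
  also have "\<dots> = (\<Sum>l<r. frob_inner (Y l) (Y l))"
  proof (rule sum.cong[OF refl])
    fix l assume l: "l \<in> {..<r}"
    have "frob_inner (Y l) Bt = (\<Sum>m<r. frob_inner (Y m) (Y l))"
      unfolding frob_comm[of "Y l"] A frob_sum_left ..
    also have "\<dots> = frob_inner (Y l) (Y l)"
      using O l by (subst sum.remove[of _ l]) (auto intro!: sum.neutral)
    finally show "frob_inner (Y l) Bt = frob_inner (Y l) (Y l)" .
  qed
  also have "\<dots> \<le> (\<Sum>l<r. 1)" by (rule sum_mono) (use N in auto)
  finally show ?thesis by simp
qed



definition col :: "real^3^3 \<Rightarrow> 3 \<Rightarrow> real^3" where "col Q k = (\<chi> a. Q$a$k)"

definition slice :: "tensor333 \<Rightarrow> real^3 \<Rightarrow> real^3^3" where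
  "slice A u = (\<chi> b c. \<Sum>a\<in>UNIV. u$a * A$a$b$c)"

definition trm :: "tensor333 \<Rightarrow> real^3^3 \<Rightarrow> (3 \<Rightarrow> real^3^3) \<Rightarrow> 3 \<times> 3 \<Rightarrow> tensor333" where
  "trm A Q W p = outer (col Q (fst p)) (col (W (fst p)) (snd p))
     (\<chi> c. \<Sum>a\<in>UNIV. \<Sum>b\<in>UNIV. Q$a$(fst p) * W (fst p)$b$(snd p) * A$a$b$c)"

lemma orth_compl:
  assumes "orthogonal_matrix Q"
  shows "(\<Sum>k\<in>UNIV. Q$a$k * Q$a'$k) = (if a = a' then 1 else 0)"
proof -
  have "Q ** transpose Q = mat 1" using assms unfolding orthogonal_matrix_def by simp
  then have "(Q ** transpose Q)$a$a' = mat 1 $ a $ a'" by simp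
  then show ?thesis by (simp add: matrix_matrix_mult_def transpose_def mat_def)
qed

lemma orth_cols:
  assumes "orthogonal_matrix Q"
  shows "col Q k \<bullet> col Q k' = (if k = k' then 1 else 0)"
proof -
  have "transpose Q ** Q = mat 1" using assms unfolding orthogonal_matrix_def by simp
  then have "(transpose Q ** Q)$k$k' = mat 1 $ k $ k'" by simp
  then show ?thesis by (simp add: matrix_matrix_mult_def transpose_def mat_def col_def inner_vec_def)
qed

lemma delta_sum: fixes b :: "'a::finite" shows "(\<Sum>b'\<in>UNIV. (if b = b' then 1 else 0) * (f b'::real)) = f b"
proof -
  have "(\<Sum>b'\<in>UNIV. (if b = b' then 1 else 0) * f b') = (\<Sum>b'\<in>UNIV. if b = b' then f b' else 0)"
    by (rule sum.cong) auto
  then show ?thesis using sum.delta'[of UNIV b f] by simp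
qed

lemma decomp:
  assumes Q: "orthogonal_matrix Q" and W: "\<And>k. orthogonal_matrix (W k)"
  shows "A = (\<Sum>p\<in>UNIV. trm A Q W p)"
proof -
  have "A$a$b$c = (\<Sum>p\<in>UNIV. trm A Q W p)$a$b$c" for a b c
  proof -
    have "(\<Sum>p\<in>UNIV. trm A Q W p)$a$b$c = (\<Sum>p\<in>UNIV. trm A Q W p $a$b$c)"
      by simp
    also have "\<dots> = (\<Sum>p\<in>UNIV\<times>UNIV. trm A Q W p $a$b$c)" by simp
    also have "\<dots> = (\<Sum>k\<in>UNIV. \<Sum>m\<in>UNIV. trm A Q W (k,m) $a$b$c)" by (rule sum.cartesian_product')
    also have "\<dots> = (\<Sum>k\<in>UNIV. \<Sum>m\<in>UNIV. Q$a$k * W k$b$m *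
         (\<Sum>a'\<in>UNIV. \<Sum>b'\<in>UNIV. Q$a'$k * W k$b'$m * A$a'$b'$c))"
      by (simp add: trm_def col_def)
    also have "\<dots> = (\<Sum>k\<in>UNIV. \<Sum>a'\<in>UNIV. Q$a$k * Q$a'$k *
         (\<Sum>b'\<in>UNIV. (\<Sum>m\<in>UNIV. W k$b$m * W k$b'$m) * A$a'$b'$c))"
    proof (rule sum.cong[OF refl])
      fix k
      have "(\<Sum>m\<in>UNIV. Q$a$k * W k$b$m * (\<Sum>a'\<in>UNIV. \<Sum>b'\<in>UNIV. Q$a'$k * W k$b'$m * A$a'$b'$c))
        = (\<Sum>m\<in>UNIV. \<Sum>a'\<in>UNIV. \<Sum>b'\<in>UNIV. Q$a$k * Q$a'$k * (W k$b$m * W k$b'$m * A$a'$b'$c))"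
        by (simp add: sum_distrib_left mult_ac)
      also have "\<dots> = (\<Sum>a'\<in>UNIV. \<Sum>b'\<in>UNIV. \<Sum>m\<in>UNIV. Q$a$k * Q$a'$k * (W k$b$m * W k$b'$m * A$a'$b'$c))"
        by (subst sum.swap) (rule sum.cong[OF refl], rule sum.swap)
      also have "\<dots> = (\<Sum>a'\<in>UNIV. Q$a$k * Q$a'$k *
         (\<Sum>b'\<in>UNIV. (\<Sum>m\<in>UNIV. W k$b$m * W k$b'$m) * A$a'$b'$c))"
        by (simp add: sum_distrib_left sum_distrib_right mult_ac)
      finally show "(\<Sum>m\<in>UNIV. Q$a$k * W k$b$m * (\<Sum>a'\<in>UNIV. \<Sum>b'\<in>UNIV. Q$a'$k * W k$b'$m * A$a'$b'$c))
        = (\<Sum>a'\<in>UNIV. Q$a$k * Q$a'$k *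
         (\<Sum>b'\<in>UNIV. (\<Sum>m\<in>UNIV. W k$b$m * W k$b'$m) * A$a'$b'$c))" .
    qed
    also have "\<dots> = (\<Sum>k\<in>UNIV. \<Sum>a'\<in>UNIV. Q$a$k * Q$a'$k * A$a'$b$c)"
      by (simp add: orth_compl[OF W] delta_sum)
    also have "\<dots> = (\<Sum>a'\<in>UNIV. (\<Sum>k\<in>UNIV. Q$a$k * Q$a'$k) * A$a'$b$c)"
      by (subst sum.swap) (simp add: sum_distrib_right)
    also have "\<dots> = A$a$b$c"
      by (simp add: orth_compl[OF Q] delta_sum)
    finally show ?thesis by simp
  qed
  then show ?thesis by (simp add: vec_eq_iff)
qed

lemma trm_orth:
  assumes Q: "orthogonal_matrix Q" and W: "\<And>k. orthogonal_matrix (W k)" and "p \<noteq> p'"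
  shows "frob_inner (trm A Q W p) (trm A Q W p') = 0"
  using assms(3)
  by (cases p; cases p') (auto simp: trm_def frob_outer orth_cols[OF Q] orth_cols[OF W])

lemma trm_zero:
  assumes "\<forall>c. (\<Sum>b\<in>UNIV. W k$b$m * slice A (col Q k)$b$c) = 0"
  shows "trm A Q W (k, m) = 0"
proof -
  have "(\<chi> c. \<Sum>a\<in>UNIV. \<Sum>b\<in>UNIV. Q$a$k * W k$b$m * A$a$b$c) = (0::real^3)"
  proof -
    have "(\<Sum>a\<in>UNIV. \<Sum>b\<in>UNIV. Q$a$k * W k$b$m * A$a$b$c) = (\<Sum>b\<in>UNIV. W k$b$m * slice A (col Q k)$b$c)" for c
      by (subst sum.swap) (simp add: slice_def col_def sum_distrib_left mult_ac)
    then show ?thesis using assms by (simp add: vec_eq_iff)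
  qed
  then show ?thesis by (simp add: trm_def vec_eq_iff)
qed

lemma trm_outer: "trm A Q W p = 0 \<or> rank_one (trm A Q W p)"
  unfolding trm_def using rank_one_outer by blast



lemma det_neg3: "det (- M :: real^3^3) = - det M"
  by (simp add: det_3 algebra_simps)

lemma slice_neg: "slice A (- u) = - slice A u"
  by (simp add: slice_def vec_eq_iff sum_negf)

lemma det_root: "\<exists>\<theta>. det (slice A (cos \<theta> *\<^sub>R p + sin \<theta> *\<^sub>R q)) = 0"
proof -
  define f where "f \<theta> = det (slice A (cos \<theta> *\<^sub>R p + sin \<theta> *\<^sub>R q))" for \<theta>
  have cont: "continuous_on {0..pi} f"
    unfolding f_def det_3 by (auto simp: slice_def intro!: continuous_intros)
  have odd: "f pi = - f 0"
    unfolding f_def by (simp add: slice_neg det_neg3)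
  show ?thesis
  proof (cases "f 0 \<le> 0")
    case True
    then obtain x where "f x = 0" using IVT'[of f 0 0 pi] cont odd by auto
    then show ?thesis unfolding f_def by blast
  next
    case False
    then obtain x where "f x = 0" using IVT2'[of f pi 0 0] cont odd by auto
    then show ?thesis unfolding f_def by blast
  qed
qed

lemma null_basis:
  fixes M :: "real^3^3"
  assumes "det M = 0"
  shows "\<exists>W::real^3^3. orthogonal_matrix W \<and> (\<forall>c. (\<Sum>b\<in>UNIV. W$b$3 * M$b$c) = 0)"
proof -
  have "det (transpose M) = 0" using assms by simp
  then have "\<not> invertible (transpose M)" using invertible_det_nz by blast
  then have "\<not> (\<exists>B. B ** transpose M = mat 1)" using invertible_left_inverse by blast
  then obtain x where x: "transpose M *v x = 0" "x \<noteq> 0"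
    using matrix_left_invertible_ker by blast
  define n where "n = (1 / norm x) *\<^sub>R x"
  have "norm n = 1" using x(2) by (simp add: n_def)
  then obtain W where W: "orthogonal_matrix W" "W *v (axis 3 1) = n"
    using orthogonal_matrix_exists_basis by blast
  have Wn: "W$b$3 = n$b" for b
    using W(2) by (simp add: matrix_vector_mult_basis column_def vec_eq_iff)
  have "(\<Sum>b\<in>UNIV. n$b * M$b$c) = 0" for c
  proof -
    have "(\<Sum>b\<in>UNIV. M$b$c * x$b) = 0"
      using x(1) by (simp add: vec_eq_iff matrix_vector_mult_def transpose_def)
    then show ?thesis by (simp add: n_def sum_divide_distrib[symmetric] mult_ac)
  qed
  then show ?thesis using W(1) Wn by auto
qed

definition Qm :: "real \<Rightarrow> real \<Rightarrow> real^3^3" where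
  "Qm \<alpha> \<beta> = vector [vector [cos \<alpha>, -(cos \<beta> * sin \<alpha>), sin \<beta> * sin \<alpha>],
                     vector [sin \<alpha>, cos \<beta> * cos \<alpha>, -(sin \<beta> * cos \<alpha>)],
                     vector [0, sin \<beta>, cos \<beta>]]"

lemma Qm_orth: "orthogonal_matrix (Qm \<alpha> \<beta>)"
proof -
  have a: "(sin \<alpha>)^2 = 1 - (cos \<alpha>)^2" and b: "(sin \<beta>)^2 = 1 - (cos \<beta>)^2"
    by (simp_all add: sin_squared_eq)
  have h0: "cos \<alpha> * (cos \<alpha> * (cos \<beta> * sin \<beta>)) + cos \<beta> * (sin \<alpha> * (sin \<alpha> * sin \<beta>))
     = ((sin \<alpha>)^2 + (cos \<alpha>)^2) * (cos \<beta> * sin \<beta>)"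
    by algebra
  have h: "cos \<beta> * sin \<beta> = cos \<alpha> * (cos \<alpha> * (cos \<beta> * sin \<beta>)) + cos \<beta> * (sin \<alpha> * (sin \<alpha> * sin \<beta>))"
  proof -
    have "cos \<alpha> * (cos \<alpha> * (cos \<beta> * sin \<beta>)) + cos \<beta> * (sin \<alpha> * (sin \<alpha> * sin \<beta>))
     = ((sin \<alpha>)^2 + (cos \<alpha>)^2) * (cos \<beta> * sin \<beta>)" by (rule h0)
    also have "\<dots> = cos \<beta> * sin \<beta>" by simp
    finally show ?thesis by (rule sym)
  qed
  show ?thesis
    unfolding orthogonal_matrix
    apply (simp add: vec_eq_iff forall_3 matrix_matrix_mult_def transpose_def mat_def sum_3 Qm_def)
    apply (simp_all add: power2_eq_square[symmetric] algebra_simps a b)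
    apply (rule h)
    done
qed

lemma Qm_col1: "col (Qm \<alpha> \<beta>) 1 = cos \<alpha> *\<^sub>R axis 1 1 + sin \<alpha> *\<^sub>R axis 2 1"
  by (simp add: vec_eq_iff forall_3 col_def Qm_def axis_def)

lemma Qm_col2: "col (Qm \<alpha> \<beta>) 2 = cos \<beta> *\<^sub>R ((- sin \<alpha>) *\<^sub>R axis 1 1 + cos \<alpha> *\<^sub>R axis 2 1) + sin \<beta> *\<^sub>R axis 3 1"
  by (simp add: vec_eq_iff forall_3 col_def Qm_def axis_def)



lemma orth_decomp_le:
  assumes "finite I" "\<forall>i\<in>I. Y i = 0 \<or> rank_one (Y i)"
    "\<forall>i\<in>I. \<forall>j\<in>I. i \<noteq> j \<longrightarrow> frob_inner (Y i) (Y j) = 0"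
  shows "\<exists>r \<le> card I. orth_decomp (sum Y I) r"
proof -
  obtain r Z where r: "r \<le> card I" and "sum Y I = (\<Sum>l<r. Z l)" "\<forall>l<r. rank_one (Z l)"
     "\<forall>l<r. \<forall>l'<r. l \<noteq> l' \<longrightarrow> frob_inner (Z l) (Z l') = 0"
    using filter_decomp[OF assms] by blast
  then have "orth_decomp (sum Y I) r" unfolding orth_decomp_def by blast
  then show ?thesis using r by blast
qed

lemma upper_decomp: "\<exists>r \<le> 7. orth_decomp A r"
proof -
  obtain \<alpha> where \<alpha>: "det (slice A (cos \<alpha> *\<^sub>R axis 1 1 + sin \<alpha> *\<^sub>R axis 2 1)) = 0"
    using det_root by blast
  obtain \<beta> where \<beta>: "det (slice A (cos \<beta> *\<^sub>R ((- sin \<alpha>) *\<^sub>R axis 1 1 + cos \<alpha> *\<^sub>R axis 2 1) + sin \<beta> *\<^sub>R axis 3 1)) = 0"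
    using det_root by blast
  define Q where "Q = Qm \<alpha> \<beta>"
  have Q: "orthogonal_matrix Q" unfolding Q_def by (rule Qm_orth)
  obtain W1 :: "real^3^3" where W1: "orthogonal_matrix W1" "\<forall>c. (\<Sum>b\<in>UNIV. W1$b$3 * slice A (col Q 1)$b$c) = 0"
    using null_basis[of "slice A (col Q 1)"] \<alpha> by (auto simp: Q_def Qm_col1)
  obtain W2 :: "real^3^3" where W2: "orthogonal_matrix W2" "\<forall>c. (\<Sum>b\<in>UNIV. W2$b$3 * slice A (col Q 2)$b$c) = 0"
    using null_basis[of "slice A (col Q 2)"] \<beta> by (auto simp: Q_def Qm_col2)
  define W where "W k = (if k = 1 then W1 else if k = 2 then W2 else mat 1)" for k :: 3
  have W: "\<And>k. orthogonal_matrix (W k)" by (simp add: W_def W1 W2 orthogonal_matrix_id)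
  have z1: "trm A Q W (1,3) = 0" by (rule trm_zero) (simp add: W_def W1)
  have z2: "trm A Q W (2,3) = 0" by (rule trm_zero) (simp add: W_def W2)
  define I where "I = UNIV - {(1::3,3::3),(2,3)}"
  have "A = sum (trm A Q W) UNIV" by (rule decomp[OF Q W])
  also have "\<dots> = sum (trm A Q W) I" unfolding I_def
    by (rule sum.mono_neutral_right) (auto simp: z1 z2)
  finally have AI: "A = sum (trm A Q W) I" .
  have "card {(1::3,3::3),(2,3)} = 2" by simp
  then have cI: "card I = 7" unfolding I_def by (simp add: card_Diff_subset)
  have "\<exists>r \<le> card I. orth_decomp (sum (trm A Q W) I) r"
    by (rule orth_decomp_le) (auto simp: I_def trm_outer trm_orth[OF Q W])
  then show ?thesis using AI cI by simp
qed

theorem theorem1p4: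
  shows "(\<forall>A :: tensor333. orth_rank A \<le> 7) \<and> (\<exists>A :: tensor333. orth_rank A = 7)"
proof
  have le: "orth_rank A \<le> 7" for A
  proof -
    obtain r where "r \<le> 7" "orth_decomp A r" using upper_decomp by blast
    then show ?thesis unfolding orth_rank_def by (meson Least_le order_trans)
  qed
  then show "\<forall>A :: tensor333. orth_rank A \<le> 7" by blast
  have "orth_decomp Bt (orth_rank Bt)"
    unfolding orth_rank_def by (rule LeastI_ex) (use upper_decomp in blast)
  then have "7 \<le> orth_rank Bt" by (rule Bt_lower)
  then show "\<exists>A :: tensor333. orth_rank A = 7" using le[of Bt] by (intro exI[of _ Bt]) simp
qed


end
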